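(* Let $\Lambda=\{a_1<\dots<a_m\}$ be finite with $m\ge4$. A certainty preserving PAF $\psi:\mathcal P^N\to\mathcal P$ is both Level-SP and $L_1^{\mathcal P}$-SP if and only if it is dictatorial, i.e. there is $i\in N$ with $\psi(\mathbf p)=p_i$ for all $\mathbf p$.
   Context: $N=\{1,\dots,n\}$; $\mathcal P$ is the set of probability distributions on $\Lambda$, identified with vectors $(p(a_1),\dots,p(a_m))$; $\mathcal C$ the CDFs, $\pi(p)(a)=p(\{x\le a\})$. A PAF is a map $\psi:\mathcal P^N\to\mathcal P$ with associated CAF $\Psi$ given by $\Psi(\pi(p_1),\dots,\pi(p_n))=\pi(\psi(p_1,\dots,p_n))$; $P_i=\pi(p_i)$. $\mathbf z_{-i}(z_i')$ is $\mathbf z$ with $i$-th coordinate replaced by $z_i'$. $\psi$ is Level-SP if for every $i$, $\mathbf P$, $P_i'$, $a$: $P_i(a)<\Psi(\mathbf P)(a)\Rightarrow\Psi(\mathbf P)(a)\le\Psi(\mathbf P_{-i}(P_i'))(a)$ and $P_i(a)>\Psi(\mathbf P)(a)\Rightarrow\Psi(\mathbf P)(a)\ge\Psi(\mathbf P_{-i}(P_i'))(a)$. $\psi$ is $L_1^{\mathcal P}$-SP if for all $i$, $\mathbf p\in\mathcal P^N$, $p_i'\in\mathcal P$: $\|\psi(\mathbf p)-p_i\|_1\le\|\psi(\mathbf p_{-i}(p_i'))-p_i\|_1$, where $\|p-q\|_1=\sum_{k=1}^m|p(a_k)-q(a_k)|$. $\psi$ is certainty preserving if for every profile $\mathbf p$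 and $A\subseteq\Lambda$, $p_i(A)=1$ for all $i$ implies $\psi(\mathbf p)(A)=1$. *)

theory Defs
  imports Complex_Main "HOL-Library.FuncSet"
begin

text \<open>The ordered finite set Lambda = {a_1 < ... < a_m} is represented by the indices
  {0..<m} with the natural order (index k stands for a_(k+1)).\<close>

definition Dists :: "nat \<Rightarrow> (nat \<Rightarrow> real) set" where
  "Dists m = {p. (\<forall>k<m. 0 \<le> p k) \<and> (\<forall>k\<ge>m. p k = 0) \<and> (\<Sum>k<m. p k) = 1}"

definition Agents :: "nat \<Rightarrow> nat set" where
  "Agents n = {1..n}"

definition Profiles :: "nat \<Rightarrow> nat \<Rightarrow> (nat \<Rightarrow> nat \<Rightarrow> real) set" where
  "Profiles n m = PiE (Agents n) (\<lambda>_. Dists m)"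

definition is_PAF :: "nat \<Rightarrow> nat \<Rightarrow> ((nat \<Rightarrow> nat \<Rightarrow> real) \<Rightarrow> (nat \<Rightarrow> real)) \<Rightarrow> bool" where
  "is_PAF n m \<psi> \<longleftrightarrow> (\<forall>pp\<in>Profiles n m. \<psi> pp \<in> Dists m)"

definition cdf :: "(nat \<Rightarrow> real) \<Rightarrow> nat \<Rightarrow> real" where
  "cdf p a = (\<Sum>k\<le>a. p k)"

definition prob_of :: "(nat \<Rightarrow> real) \<Rightarrow> nat set \<Rightarrow> real" where
  "prob_of p A = (\<Sum>k\<in>A. p k)"

definition L1 :: "nat \<Rightarrow> (nat \<Rightarrow> real) \<Rightarrow> (nat \<Rightarrow> real) \<Rightarrow> real" where
  "L1 m p q = (\<Sum>k<m. \<bar>p k - q k\<bar>)"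

definition level_SP :: "nat \<Rightarrow> nat \<Rightarrow> ((nat \<Rightarrow> nat \<Rightarrow> real) \<Rightarrow> (nat \<Rightarrow> real)) \<Rightarrow> bool" where
  "level_SP n m \<psi> \<longleftrightarrow>
     (\<forall>i\<in>Agents n. \<forall>pp\<in>Profiles n m. \<forall>p'\<in>Dists m. \<forall>a<m.
        (cdf (pp i) a < cdf (\<psi> pp) a \<longrightarrow> cdf (\<psi> pp) a \<le> cdf (\<psi> (pp(i := p'))) a) \<and>
        (cdf (pp i) a > cdf (\<psi> pp) a \<longrightarrow> cdf (\<psi> pp) a \<ge> cdf (\<psi> (pp(i := p'))) a))"

definition L1_SP :: "nat \<Rightarrow> nat \<Rightarrow> ((nat \<Rightarrow> nat \<Rightarrow> real) \<Rightarrow> (nat \<Rightarrow> real)) \<Rightarrow> bool" where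
  "L1_SP n m \<psi> \<longleftrightarrow>
     (\<forall>i\<in>Agents n. \<forall>pp\<in>Profiles n m. \<forall>p'\<in>Dists m.
        L1 m (\<psi> pp) (pp i) \<le> L1 m (\<psi> (pp(i := p'))) (pp i))"

definition certainty_preserving :: "nat \<Rightarrow> nat \<Rightarrow> ((nat \<Rightarrow> nat \<Rightarrow> real) \<Rightarrow> (nat \<Rightarrow> real)) \<Rightarrow> bool" where
  "certainty_preserving n m \<psi> \<longleftrightarrow>
     (\<forall>pp\<in>Profiles n m. \<forall>A\<subseteq>{..<m}.
        (\<forall>i\<in>Agents n. prob_of (pp i) A = 1) \<longrightarrow> prob_of (\<psi> pp) A = 1)"

definition dictatorial :: "nat \<Rightarrow> nat \<Rightarrow> ((nat \<Rightarrow> nat \<Rightarrow> real) \<Rightarrow> (nat \<Rightarrow> real)) \<Rightarrow> bool" where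
  "dictatorial n m \<psi> \<longleftrightarrow> (\<exists>i\<in>Agents n. \<forall>pp\<in>Profiles n m. \<psi> pp = pp i)"

end

theory Submission
  imports Defs
begin


definition pt :: "nat \<Rightarrow> real \<Rightarrow> nat \<Rightarrow> real" where
  "pt x w = (\<lambda>k. if k = x then w else 0)"

definition d3 :: "nat \<Rightarrow> real \<Rightarrow> nat \<Rightarrow> real \<Rightarrow> nat \<Rightarrow> real \<Rightarrow> nat \<Rightarrow> real" where
  "d3 x0 w0 x1 w1 x2 w2 = (\<lambda>k. pt x0 w0 k + pt x1 w1 k + pt x2 w2 k)"

lemma cdf_d3: "cdf (d3 x0 w0 x1 w1 x2 w2) a =
   (if x0 \<le> a then w0 else 0) + (if x1 \<le> a then w1 else 0) + (if x2 \<le> a then w2 else 0)"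
  unfolding cdf_def d3_def pt_def by (simp add: sum.distrib)

lemma d3_Dists:
  assumes "x0 < m" "x1 < m" "x2 < m" "w0 \<ge> 0" "w1 \<ge> 0" "w2 \<ge> 0" "w0 + w1 + w2 = 1"
  shows "d3 x0 w0 x1 w1 x2 w2 \<in> Dists m"
  using assms unfolding Dists_def d3_def pt_def by (auto simp: sum.distrib)

lemma Dists_nonneg: "q \<in> Dists m \<Longrightarrow> 0 \<le> q k"
  unfolding Dists_def by (cases "k < m") auto

lemma cdf_mono: assumes "q \<in> Dists m" "a \<le> b" shows "cdf q a \<le> cdf q b"
  unfolding cdf_def using assms Dists_nonneg by (intro sum_mono2) auto

lemma cdf_top: assumes "q \<in> Dists m" "m \<le> Suc a" shows "cdf q a = 1"
proof -
  have "cdf q a = (\<Sum>k<m. q k) + (\<Sum>k\<in>{..a}-{..<m}. q k)"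
  proof -
    have "{..<m} \<subseteq> {..a}" using assms(2) by auto
    then show ?thesis unfolding cdf_def using sum.subset_diff[of "{..<m}" "{..a}" q] by simp
  qed
  also have "(\<Sum>k\<in>{..a}-{..<m}. q k) = 0" using assms(1) unfolding Dists_def by (intro sum.neutral) auto
  finally show ?thesis using assms(1) unfolding Dists_def by simp
qed

lemma cdf_nonneg: "q \<in> Dists m \<Longrightarrow> 0 \<le> cdf q a"
  unfolding cdf_def using Dists_nonneg by (intro sum_nonneg) auto

lemma cdf_le1: assumes "q \<in> Dists m" shows "cdf q a \<le> 1"
proof -
  have "cdf q a \<le> cdf q (max a m)" using cdf_mono[OF assms] by simp
  also have "\<dots> = 1" using cdf_top[OF assms] by simp
  finally show ?thesis .
qed

lemma cdf_0: "cdf q 0 = q 0" unfolding cdf_def by simp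
lemma cdf_Suc: "cdf q (Suc k) = cdf q k + q (Suc k)" unfolding cdf_def by simp

lemma Profiles_upd: "pp \<in> Profiles n m \<Longrightarrow> i \<in> Agents n \<Longrightarrow> p \<in> Dists m \<Longrightarrow> pp(i := p) \<in> Profiles n m"
  unfolding Profiles_def using PiE_fun_upd by (metis insert_absorb)

lemma Profiles_restrict: "(\<And>j. j \<in> Agents n \<Longrightarrow> f j \<in> Dists m) \<Longrightarrow> restrict f (Agents n) \<in> Profiles n m"
  unfolding Profiles_def by (simp add: restrict_PiE_iff)

lemma Profiles_mem: "pp \<in> Profiles n m \<Longrightarrow> j \<in> Agents n \<Longrightarrow> pp j \<in> Dists m"
  unfolding Profiles_def by auto

lemma Profiles_ext: "pp \<in> Profiles n m \<Longrightarrow> restrict pp (Agents n) = pp"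
  unfolding Profiles_def by (simp add: PiE_iff extensional_restrict)

lemma L1_split: assumes "4 \<le> m"
  shows "L1 m p q = \<bar>p 0 - q 0\<bar> + \<bar>p 1 - q 1\<bar> + \<bar>p 2 - q 2\<bar> + (\<Sum>k\<in>{3..<m-1}. \<bar>p k - q k\<bar>) + \<bar>p (m-1) - q (m-1)\<bar>"
proof -
  obtain m' where m: "m = Suc m'" "3 \<le> m'" using assms by (cases m) auto
  let ?f = "\<lambda>k. \<bar>p k - q k\<bar>"
  have "L1 m p q = sum ?f {..<m'} + ?f m'" unfolding L1_def m by simp
  also have "sum ?f {..<m'} = sum ?f {0..<3} + sum ?f {3..<m'}"
    using m by (simp add: lessThan_atLeast0 sum.atLeastLessThan_concat)
  also have "sum ?f {0..<3} = ?f 0 + ?f 1 + ?f 2" by (simp add: numeral_3_eq_3 numeral_2_eq_2)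
  finally show ?thesis using m by simp
qed




lemma prob_of_d3: "prob_of (d3 x0 w0 x1 w1 x2 w2) A =
   (if x0 \<in> A then w0 else 0) + (if x1 \<in> A then w1 else 0) + (if x2 \<in> A then w2 else 0)"
  if "finite A" for A
  unfolding prob_of_def d3_def pt_def using that by (simp add: sum.distrib)

locale SPsetup =
  fixes n m :: nat and \<psi> :: "(nat \<Rightarrow> nat \<Rightarrow> real) \<Rightarrow> (nat \<Rightarrow> real)"
  assumes m4: "4 \<le> m" and paf: "is_PAF n m \<psi>" and cp: "certainty_preserving n m \<psi>"
    and lsp: "level_SP n m \<psi>" and l1sp: "L1_SP n m \<psi>"
begin

lemma out_Dists: "pp \<in> Profiles n m \<Longrightarrow> \<psi> pp \<in> Dists m"
  using paf unfolding is_PAF_def by auto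

lemma lspD:
  assumes "i \<in> Agents n" "pp \<in> Profiles n m" "p' \<in> Dists m" "a < m"
  shows "(cdf (pp i) a < cdf (\<psi> pp) a \<longrightarrow> cdf (\<psi> pp) a \<le> cdf (\<psi> (pp(i := p'))) a) \<and>
        (cdf (pp i) a > cdf (\<psi> pp) a \<longrightarrow> cdf (\<psi> pp) a \<ge> cdf (\<psi> (pp(i := p'))) a)"
proof -
  have "\<forall>i\<in>Agents n. \<forall>pp\<in>Profiles n m. \<forall>p'\<in>Dists m. \<forall>a<m.
        (cdf (pp i) a < cdf (\<psi> pp) a \<longrightarrow> cdf (\<psi> pp) a \<le> cdf (\<psi> (pp(i := p'))) a) \<and>
        (cdf (pp i) a > cdf (\<psi> pp) a \<longrightarrow> cdf (\<psi> pp) a \<ge> cdf (\<psi> (pp(i := p'))) a)"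
    using lsp unfolding level_SP_def .
  then show ?thesis using assms by simp
qed

lemma single_change:
  assumes pp: "pp \<in> Profiles n m" and i: "i \<in> Agents n" and p': "p' \<in> Dists m" and a: "a < m"
    and eq: "cdf p' a = cdf (pp i) a"
  shows "cdf (\<psi> (pp(i := p'))) a = cdf (\<psi> pp) a"
proof -
  define pp' where "pp' = pp(i := p')"
  have pp': "pp' \<in> Profiles n m" unfolding pp'_def using Profiles_upd[OF pp i p'] .
  have bck: "pp'(i := pp i) = pp" unfolding pp'_def by simp
  have pi: "pp i \<in> Dists m" using Profiles_mem[OF pp i] .
  have pp'i: "pp' i = p'" unfolding pp'_def by simp
  let ?t = "cdf (pp i) a" and ?c = "cdf (\<psi> pp) a" and ?c' = "cdf (\<psi> pp') a"
  have S1: "?t < ?c \<Longrightarrow> ?c \<le> ?c'" "?t > ?c \<Longrightarrow> ?c \<ge> ?c'"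
    using lspD[OF i pp p' a] unfolding pp'_def by blast+
  have L: "(cdf (pp' i) a < ?c' \<longrightarrow> ?c' \<le> cdf (\<psi> (pp'(i := pp i))) a) \<and>
           (cdf (pp' i) a > ?c' \<longrightarrow> ?c' \<ge> cdf (\<psi> (pp'(i := pp i))) a)"
    using lspD[OF i pp' pi a] .
  have S2: "?t < ?c' \<Longrightarrow> ?c' \<le> ?c" "?t > ?c' \<Longrightarrow> ?c' \<ge> ?c"
    using L unfolding bck pp'i eq by auto
  have "?c' = ?c"
    using S1 S2 by (cases "?t < ?c"; cases "?t > ?c"; cases "?t < ?c'"; cases "?t > ?c'") auto
  then show ?thesis unfolding pp'_def .
qed

lemma locality:
  assumes pp: "pp \<in> Profiles n m" and pp': "pp' \<in> Profiles n m" and a: "a < m"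
    and eq: "\<And>j. j \<in> Agents n \<Longrightarrow> cdf (pp j) a = cdf (pp' j) a"
  shows "cdf (\<psi> pp) a = cdf (\<psi> pp') a"
proof -
  define hyb where "hyb S = restrict (\<lambda>j. if j \<in> S then pp' j else pp j) (Agents n)" for S
  have fin: "finite (Agents n)" unfolding Agents_def by simp
  have "hyb S \<in> Profiles n m \<and> cdf (\<psi> (hyb S)) a = cdf (\<psi> pp) a" if "S \<subseteq> Agents n" for S
    using finite_subset[OF that fin] that
  proof (induction S rule: finite_subset_induct)
    case empty
    have "hyb {} = restrict pp (Agents n)" unfolding hyb_def by (intro ext) (simp add: restrict_def)
    then have "hyb {} = pp" using Profiles_ext[OF pp] by simp
    then show ?case using pp by simp
  next
    case (insert x F)
    have xA: "x \<in> Agents n" using insert by simp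
    have e: "hyb (insert x F) = (hyb F)(x := pp' x)"
    proof (rule ext)
      fix j show "hyb (insert x F) j = ((hyb F)(x := pp' x)) j"
        unfolding hyb_def using xA by (cases "j = x"; cases "j \<in> Agents n") simp_all
    qed
    have hx: "hyb F x = pp x" unfolding hyb_def using insert.hyps(3) xA by simp
    have hF: "hyb F \<in> Profiles n m" using insert.IH by simp
    have p'x: "pp' x \<in> Dists m" using Profiles_mem[OF pp' xA] .
    have "hyb (insert x F) \<in> Profiles n m"
      unfolding e using Profiles_upd[OF hF xA p'x] .
    moreover have "cdf (\<psi> (hyb (insert x F))) a = cdf (\<psi> (hyb F)) a"
      unfolding e using single_change[OF hF xA p'x a] eq[OF xA] hx by simp
    ultimately show ?case using insert by simp
  qed
  from this[of "Agents n"] have "cdf (\<psi> (hyb (Agents n))) a = cdf (\<psi> pp) a" by simp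
  moreover have "hyb (Agents n) = restrict pp' (Agents n)" unfolding hyb_def
    by (intro ext) (simp add: restrict_def)
  then have "hyb (Agents n) = pp'" using Profiles_ext[OF pp'] by simp
  ultimately show ?thesis by simp
qed

definition mk :: "real \<Rightarrow> nat \<Rightarrow> real" where "mk t = d3 0 t (m-1) (1-t) 0 0"
definition prof :: "(nat \<Rightarrow> real) \<Rightarrow> nat \<Rightarrow> nat \<Rightarrow> real" where
  "prof x = restrict (\<lambda>j. mk (x j)) (Agents n)"
definition G :: "(nat \<Rightarrow> real) \<Rightarrow> real" where "G x = cdf (\<psi> (prof x)) 0"
definition xin :: "(nat \<Rightarrow> real) \<Rightarrow> bool" where "xin x \<longleftrightarrow> (\<forall>j\<in>Agents n. 0 \<le> x j \<and> x j \<le> 1)"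

lemma mk_Dists: "0 \<le> t \<Longrightarrow> t \<le> 1 \<Longrightarrow> mk t \<in> Dists m"
  unfolding mk_def using m4 by (intro d3_Dists) auto

lemma cdf_mk: "a < m - 1 \<Longrightarrow> cdf (mk t) a = t"
  unfolding mk_def cdf_d3 by auto

lemma prof_Profiles: "xin x \<Longrightarrow> prof x \<in> Profiles n m"
  unfolding prof_def xin_def by (intro Profiles_restrict mk_Dists) auto

lemma prof_upd: "i \<in> Agents n \<Longrightarrow> (prof x)(i := mk t) = prof (x(i := t))"
  unfolding prof_def by (auto simp: fun_eq_iff)

lemma G_cong: "(\<And>j. j \<in> Agents n \<Longrightarrow> x j = y j) \<Longrightarrow> G x = G y"
  unfolding G_def prof_def by (metis (mono_tags, lifting) restrict_ext)

lemma G_bounds: "xin x \<Longrightarrow> 0 \<le> G x \<and> G x \<le> 1"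
  unfolding G_def using out_Dists[OF prof_Profiles] cdf_nonneg cdf_le1 by blast

lemma flat:
  assumes x: "xin x" and a: "a < m - 1"
  shows "cdf (\<psi> (prof x)) a = G x"
proof -
  define A where "A = {..<m} - {1..a}"
  have finA: "finite A" unfolding A_def by simp
  have Asub: "A \<subseteq> {..<m}" unfolding A_def by auto
  have "prob_of (prof x j) A = 1" if j: "j \<in> Agents n" for j
  proof -
    have "prof x j = mk (x j)" unfolding prof_def using j by simp
    moreover have "0 \<in> A" "m - 1 \<in> A" unfolding A_def using a m4 by auto
    ultimately show ?thesis unfolding mk_def using prob_of_d3[OF finA] by simp
  qed
  then have P1: "prob_of (\<psi> (prof x)) A = 1"
    using cp prof_Profiles[OF x] Asub unfolding certainty_preserving_def by blast
  let ?q = "\<psi> (prof x)"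
  have qD: "?q \<in> Dists m" using out_Dists[OF prof_Profiles[OF x]] .
  have "{..<m} = A \<union> {1..a}" "A \<inter> {1..a} = {}" unfolding A_def using a by auto
  then have "(\<Sum>k<m. ?q k) = prob_of ?q A + (\<Sum>k\<in>{1..a}. ?q k)"
    unfolding prob_of_def by (metis finA finite_atLeastAtMost sum.union_disjoint)
  then have z: "(\<Sum>k\<in>{1..a}. ?q k) = 0" using P1 qD unfolding Dists_def by simp
  have "{..a} = insert 0 {1..a}" by auto
  then have "cdf ?q a = ?q 0 + (\<Sum>k\<in>{1..a}. ?q k)" unfolding cdf_def by simp
  then show ?thesis unfolding G_def using z cdf_0 by simp
qed

lemma loc_G:
  assumes pp: "pp \<in> Profiles n m" and a: "a < m - 1"
  shows "cdf (\<psi> pp) a = G (\<lambda>j. cdf (pp j) a)"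
proof -
  let ?x = "\<lambda>j. cdf (pp j) a"
  have x: "xin ?x" unfolding xin_def using Profiles_mem[OF pp] cdf_nonneg cdf_le1 by blast
  have "cdf (\<psi> pp) a = cdf (\<psi> (prof ?x)) a"
    using a by (intro locality pp prof_Profiles x) (auto simp: prof_def cdf_mk)
  then show ?thesis using flat[OF x a] by simp
qed

lemma G_mono:
  assumes x: "xin x" and y: "xin y" and le: "\<And>j. j \<in> Agents n \<Longrightarrow> x j \<le> y j"
  shows "G x \<le> G y"
proof -
  define pp where "pp = restrict (\<lambda>j. d3 0 (x j) 1 (y j - x j) (m-1) (1 - y j)) (Agents n)"
  have pp: "pp \<in> Profiles n m" unfolding pp_def using x y le m4
    by (intro Profiles_restrict d3_Dists) (auto simp: xin_def)
  have "G x = G (\<lambda>j. cdf (pp j) 0)" using m4 by (intro G_cong) (auto simp: pp_def cdf_d3)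
  moreover have "G y = G (\<lambda>j. cdf (pp j) 1)" using m4 by (intro G_cong) (auto simp: pp_def cdf_d3)
  moreover have "cdf (\<psi> pp) 0 \<le> cdf (\<psi> pp) 1" using cdf_mono[OF out_Dists[OF pp]] by simp
  ultimately show ?thesis using loc_G[OF pp] m4 by simp
qed

lemma G_median:
  assumes f: "xin f" and i: "i \<in> Agents n" and t: "0 \<le> t" "t \<le> 1"
  shows "G (f(i:=0)) \<le> G (f(i:=1)) \<and> G (f(i:=t)) = max (G (f(i:=0))) (min t (G (f(i:=1))))"
proof -
  define h where "h s = G (f(i:=s))" for s
  have xs: "xin (f(i:=s))" if "0 \<le> s" "s \<le> 1" for s using f that unfolding xin_def by auto
  have P: "(s < h s \<longrightarrow> h s \<le> h s') \<and> (s > h s \<longrightarrow> h s \<ge> h s')"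
    if s: "0 \<le> s" "s \<le> 1" and s': "0 \<le> s'" "s' \<le> 1" for s s'
  proof -
    have pp: "prof (f(i:=s)) \<in> Profiles n m" using prof_Profiles[OF xs[OF s]] .
    have "cdf (prof (f(i:=s)) i) 0 = s" using i m4 by (simp add: prof_def cdf_mk)
    moreover have "(prof (f(i:=s)))(i := mk s') = prof (f(i:=s'))" using prof_upd[OF i] by simp
    moreover have "mk s' \<in> Dists m" using mk_Dists s' by simp
    moreover have "(0::nat) < m" using m4 by simp
    ultimately have "(cdf (prof (f(i:=s)) i) 0 < cdf (\<psi> (prof (f(i:=s)))) 0 \<longrightarrow>
          cdf (\<psi> (prof (f(i:=s)))) 0 \<le> cdf (\<psi> ((prof (f(i:=s)))(i := mk s'))) 0) \<and>
        (cdf (prof (f(i:=s)) i) 0 > cdf (\<psi> (prof (f(i:=s)))) 0 \<longrightarrow>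
          cdf (\<psi> (prof (f(i:=s)))) 0 \<ge> cdf (\<psi> ((prof (f(i:=s)))(i := mk s'))) 0)"
      using lspD[OF i pp \<open>mk s' \<in> Dists m\<close> \<open>0 < m\<close>] by simp
    then show ?thesis unfolding h_def G_def using \<open>cdf (prof (f(i:=s)) i) 0 = s\<close>
        \<open>(prof (f(i:=s)))(i := mk s') = prof (f(i:=s'))\<close> by simp
  qed
  have h0: "0 \<le> h 0" "h 1 \<le> 1" using G_bounds xs unfolding h_def by auto
  have C: "h 0 \<le> h 1 \<and> h t = max (h 0) (min t (h 1))"
  proof (cases "t < h t")
    case True
    have "h t \<le> h 0" "h t \<le> h 1" using P[OF t] True by auto
    moreover have "h 0 \<le> h t" using P[of 0 t] t True \<open>h t \<le> h 0\<close> by auto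
    ultimately show ?thesis using True by auto
  next
    case False
    show ?thesis
    proof (cases "t > h t")
      case True
      have "h t \<ge> h 0" "h t \<ge> h 1" using P[OF t] True by auto
      moreover have "h 1 \<ge> h t" using P[of 1 t] t True \<open>h t \<ge> h 1\<close> by auto
      ultimately show ?thesis using True by auto
    next
      case False2: False
      have eq: "h t = t" using False False2 by auto
      have "h 0 \<le> t"
      proof (rule ccontr)
        assume "\<not> h 0 \<le> t"
        then have "0 < h 0" using t by auto
        then have "h 0 \<le> h t" using P[of 0 t] t by auto
        then show False using eq \<open>\<not> h 0 \<le> t\<close> by auto
      qed
      moreover have "t \<le> h 1"
      proof (rule ccontr)
        assume "\<not> t \<le> h 1"
        then have "1 > h 1" using t by auto
        then have "h 1 \<ge> h t" using P[of 1 t] t by auto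
        then show False using eq \<open>\<not> t \<le> h 1\<close> by auto
      qed
      ultimately show ?thesis using eq by auto
    qed
  qed
  then show ?thesis unfolding h_def .
qed

end



context SPsetup begin

definition W :: "nat set \<Rightarrow> real" where "W S = G (\<lambda>j. if j \<in> S then 1 else 0)"
definition v :: "nat \<Rightarrow> real \<Rightarrow> nat \<Rightarrow> real \<Rightarrow> nat set \<Rightarrow> nat \<Rightarrow> real" where
  "v i t k b T = (\<lambda>j. if j = i then t else if j = k then b else if j \<in> T then 1 else 0)"

lemma xin_ind: "xin (\<lambda>j. if j \<in> S then 1 else 0)" unfolding xin_def by auto

lemma W_bounds: "0 \<le> W S \<and> W S \<le> 1" unfolding W_def using G_bounds[OF xin_ind] .

lemma W_mono: "S \<subseteq> S' \<Longrightarrow> W S \<le> W S'"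
  unfolding W_def by (intro G_mono xin_ind) auto

lemma prob_of_upto: "q \<in> Dists m \<Longrightarrow> B \<subseteq> {..<m} \<Longrightarrow> (\<Sum>k<m. q k) = prob_of q B + prob_of q ({..<m} - B)"
  unfolding prob_of_def by (metis add.commute finite_lessThan sum.subset_diff)

lemma cpD: "pp \<in> Profiles n m \<Longrightarrow> A \<subseteq> {..<m} \<Longrightarrow> (\<And>i. i \<in> Agents n \<Longrightarrow> prob_of (pp i) A = 1) \<Longrightarrow> prob_of (\<psi> pp) A = 1"
  using cp unfolding certainty_preserving_def by blast

lemma G_zero: "G (\<lambda>_. 0) = 0"
proof -
  let ?x = "\<lambda>_::nat. 0::real"
  have x: "xin ?x" unfolding xin_def by simp
  define A where "A = {1..<m}"
  have finA: "finite A" unfolding A_def by simp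
  have pa: "prob_of (prof ?x j) A = 1" if j: "j \<in> Agents n" for j
  proof -
    have "prof ?x j = mk 0" unfolding prof_def using j by simp
    moreover have "0 \<notin> A" "m - 1 \<in> A" unfolding A_def using m4 by auto
    ultimately show ?thesis unfolding mk_def using prob_of_d3[OF finA] by simp
  qed
  have As: "A \<subseteq> {..<m}" unfolding A_def by auto
  then have P1: "prob_of (\<psi> (prof ?x)) A = 1" using cpD[OF prof_Profiles[OF x] _ pa] by blast
  let ?q = "\<psi> (prof ?x)"
  have qD: "?q \<in> Dists m" using out_Dists[OF prof_Profiles[OF x]] .
  have "{..<m} - A = {0}" unfolding A_def using m4 by auto
  then have "1 = 1 + ?q 0" using prob_of_upto[OF qD As] P1 qD unfolding A_def Dists_def prob_of_def
    by auto
  then show ?thesis unfolding G_def cdf_0 by simp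
qed

lemma G_one: "G (\<lambda>_. 1) = 1"
proof -
  let ?x = "\<lambda>_::nat. 1::real"
  have x: "xin ?x" unfolding xin_def by simp
  define A where "A = {0::nat}"
  have finA: "finite A" unfolding A_def by simp
  have pa: "prob_of (prof ?x j) A = 1" if j: "j \<in> Agents n" for j
  proof -
    have "prof ?x j = mk 1" unfolding prof_def using j by simp
    moreover have "0 \<in> A" unfolding A_def by auto
    ultimately show ?thesis unfolding mk_def using prob_of_d3[OF finA] by simp
  qed
  have "A \<subseteq> {..<m}" unfolding A_def using m4 by auto
  then have P1: "prob_of (\<psi> (prof ?x)) A = 1" using cpD[OF prof_Profiles[OF x] _ pa] by blast
  then show ?thesis unfolding G_def cdf_0 A_def prob_of_def by simp
qed

lemma W_empty: "W {} = 0" unfolding W_def using G_zero by simp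

lemma W_all: "W (Agents n) = 1"
proof -
  have "W (Agents n) = G (\<lambda>_. 1)" unfolding W_def by (intro G_cong) auto
  then show ?thesis using G_one by simp
qed

lemma G_v:
  assumes i: "i \<in> Agents n" and k: "k \<in> Agents n" and ik: "i \<noteq> k" and T: "T \<subseteq> Agents n"
    and iT: "i \<notin> T" and kT: "k \<notin> T" and t: "0 \<le> t" "t \<le> 1" and b: "0 \<le> b" "b \<le> 1"
  shows "G (v i t k b T) = max (max (W T) (min b (W (insert k T))))
            (min t (max (W (insert i T)) (min b (W (insert i (insert k T))))))"
proof -
  have f: "xin (v i 0 k b T)" unfolding xin_def v_def using b by auto
  have e1: "(v i 0 k b T)(i := s) = v i s k b T" for s unfolding v_def using ik by (auto simp: fun_eq_iff)
  have m1: "G (v i t k b T) = max (G (v i 0 k b T)) (min t (G (v i 1 k b T)))"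
    using G_median[OF f i t] unfolding e1 by simp
  have f0: "xin (v i c k 0 T)" if "0 \<le> c" "c \<le> 1" for c unfolding xin_def v_def using that by auto
  have e2: "(v i c k 0 T)(k := s) = v i c k s T" for c s unfolding v_def using ik by (auto simp: fun_eq_iff)
  have m2: "G (v i c k b T) = max (G (v i c k 0 T)) (min b (G (v i c k 1 T)))" if "0 \<le> c" "c \<le> 1" for c
    using G_median[OF f0[OF that] k b] unfolding e2 by simp
  have w1: "G (v i 0 k 0 T) = W T" unfolding W_def v_def using iT kT by (intro G_cong) auto
  have w2: "G (v i 0 k 1 T) = W (insert k T)" unfolding W_def v_def using iT kT ik by (intro G_cong) auto
  have w3: "G (v i 1 k 0 T) = W (insert i T)" unfolding W_def v_def using iT kT ik by (intro G_cong) auto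
  have w4: "G (v i 1 k 1 T) = W (insert i (insert k T))" unfolding W_def v_def using iT kT ik by (intro G_cong) auto
  note A0 = m2[of 0, OF order_refl zero_le_one, unfolded w1 w2]
  note A1 = m2[of 1, OF zero_le_one order_refl, unfolded w3 w4]
  show ?thesis unfolding m1 A0 A1 by (rule refl)
qed

lemma pdf_cdf: "k \<ge> 1 \<Longrightarrow> q k = cdf q k - cdf q (k - 1)"
  using cdf_Suc[of q "k - 1"] by simp

lemma cdf_eq_fun: "(\<And>a. cdf q a = cdf p a) \<Longrightarrow> q = p"
proof (rule ext)
  fix k assume h: "\<And>a. cdf q a = cdf p a"
  show "q k = p k"
  proof (cases k)
    case 0 then show ?thesis using h[of 0] cdf_0 by simp
  next
    case (Suc k') then show ?thesis using h[of k] h[of k'] cdf_Suc[of q k'] cdf_Suc[of p k'] by simp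
  qed
qed

end



context SPsetup begin

definition PP :: "nat \<Rightarrow> nat \<Rightarrow> nat set \<Rightarrow> (nat \<Rightarrow> real) \<Rightarrow> (nat \<Rightarrow> real) \<Rightarrow> (nat \<Rightarrow> real) \<Rightarrow> (nat \<Rightarrow> real) \<Rightarrow> nat \<Rightarrow> nat \<Rightarrow> real" where
  "PP i k T p pk pT pR = restrict (\<lambda>j. if j = i then p else if j = k then pk else if j \<in> T then pT else pR) (Agents n)"

lemma PP_Profiles: "p \<in> Dists m \<Longrightarrow> pk \<in> Dists m \<Longrightarrow> pT \<in> Dists m \<Longrightarrow> pR \<in> Dists m \<Longrightarrow> PP i k T p pk pT pR \<in> Profiles n m"
  unfolding PP_def by (intro Profiles_restrict) auto

lemma PP_upd: "i \<in> Agents n \<Longrightarrow> (PP i k T p pk pT pR)(i := p') = PP i k T p' pk pT pR"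
proof (rule ext)
  fix j assume i: "i \<in> Agents n"
  show "((PP i k T p pk pT pR)(i := p')) j = PP i k T p' pk pT pR j"
    unfolding PP_def using i by (cases "j = i"; cases "j \<in> Agents n") simp_all
qed

lemma PP_i: "i \<in> Agents n \<Longrightarrow> PP i k T p pk pT pR i = p" unfolding PP_def by simp

lemma shape:
  assumes "p \<in> Dists m" "pk \<in> Dists m" "pT \<in> Dists m" "pR \<in> Dists m" "a < m - 1"
  shows "cdf (\<psi> (PP i k T p pk pT pR)) a =
    G (\<lambda>j. if j = i then cdf p a else if j = k then cdf pk a else if j \<in> T then cdf pT a else cdf pR a)"
proof -
  have "cdf (\<psi> (PP i k T p pk pT pR)) a = G (\<lambda>j. cdf (PP i k T p pk pT pR j) a)"
    by (rule loc_G[OF PP_Profiles[OF assms(1-4)] assms(5)])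
  also have "\<dots> = G (\<lambda>j. if j = i then cdf p a else if j = k then cdf pk a else if j \<in> T then cdf pT a else cdf pR a)"
    by (rule G_cong) (simp add: PP_def)
  finally show ?thesis .
qed

lemma shape_v1:
  assumes "p \<in> Dists m" "pk \<in> Dists m" "pT \<in> Dists m" "pR \<in> Dists m" "a < m - 1"
    and "cdf p a = x" "cdf pk a = y" "cdf pT a = 1" "cdf pR a = 0"
  shows "cdf (\<psi> (PP i k T p pk pT pR)) a = G (v i x k y T)"
  unfolding shape[OF assms(1-5)] v_def using assms(6-) by (intro G_cong) auto

lemma shape_v0:
  assumes "p \<in> Dists m" "pk \<in> Dists m" "pT \<in> Dists m" "pR \<in> Dists m" "a < m - 1"
    and "cdf p a = x" "cdf pk a = y" "cdf pT a = 0" "cdf pR a = 0"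
  shows "cdf (\<psi> (PP i k T p pk pT pR)) a = G (v i x k y {})"
  unfolding shape[OF assms(1-5)] v_def using assms(6-) by (intro G_cong) auto

lemma shape_v2:
  assumes "p \<in> Dists m" "pk \<in> Dists m" "pT \<in> Dists m" "pR \<in> Dists m" "a < m - 1"
    and "cdf p a = x" "cdf pk a = y" "cdf pT a = 1" "cdf pR a = 1"
  shows "cdf (\<psi> (PP i k T p pk pT pR)) a = G (v i x k y (Agents n - {i, k}))"
  unfolding shape[OF assms(1-5)] v_def using assms(6-) by (intro G_cong) auto

lemma L1SP_D: "i \<in> Agents n \<Longrightarrow> pp \<in> Profiles n m \<Longrightarrow> p' \<in> Dists m \<Longrightarrow>
   L1 m (\<psi> pp) (pp i) \<le> L1 m (\<psi> (pp(i := p'))) (pp i)"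
  using l1sp unfolding L1_SP_def by blast

lemma out_pdf:
  assumes pp: "pp \<in> Profiles n m" and "1 \<le> k"
  shows "\<psi> pp k = cdf (\<psi> pp) k - cdf (\<psi> pp) (k - 1)"
  using pdf_cdf assms(2) by blast


lemma cdf_pt1: "cdf (d3 x 1 0 0 0 0) a = (if x \<le> a then 1 else 0)" unfolding cdf_d3 by simp

lemma Mminus:
  assumes i: "i \<in> Agents n" and k: "k \<in> Agents n" and ik: "i \<noteq> k" and T: "T \<subseteq> Agents n"
    and iT: "i \<notin> T" and kT: "k \<notin> T"
  shows "W (insert i (insert k T)) \<le> max (W (insert i T)) (W (insert k T))"
proof (rule ccontr)
  assume H: "\<not> ?thesis"
  define W1 where "W1 = W (insert i T)"
  define W2 where "W2 = W (insert k T)"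
  define W3 where "W3 = W (insert i (insert k T))"
  define Wi where "Wi = W {i}"
  define WT where "WT = W T"
  have b: "0 \<le> Wi" "Wi \<le> W1" "WT \<le> W2" "W3 \<le> 1" "0 \<le> WT"
    unfolding Wi_def W1_def WT_def W2_def W3_def using W_bounds W_mono[of "{i}" "insert i T"]
      W_mono[of T "insert k T"] by auto
  have H': "max W1 W2 < W3" using H unfolding W1_def W2_def W3_def by (auto simp: not_le)
  define s where "s = (max W1 W2 + W3) / 2"
  define \<beta> where "\<beta> = max (max Wi W2) (2 * s - 1)"
  define \<alpha> where "\<alpha> = (s + \<beta>) / 2"
  have s: "max W1 W2 < s" "s < W3" "s < 1" "0 < s" using H' b unfolding s_def by auto
  have \<beta>: "\<beta> < s" "Wi \<le> \<beta>" "W2 \<le> \<beta>" "2 * s - 1 \<le> \<beta>" using s b unfolding \<beta>_def by auto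
  have \<alpha>: "\<beta> < \<alpha>" "\<alpha> < s" using \<beta> unfolding \<alpha>_def by auto
  have m3: "2 < m - 1" "0 < m - 1" "1 < m - 1" "2 < m" "1 < m" "m - 1 < m" using m4 by auto
  define pT where "pT = d3 1 1 0 0 0 0"
  define pk where "pk = d3 1 s (m-1) (1-s) 0 0"
  define pR where "pR = d3 (m-1) 1 0 0 0 0"
  define p where "p = d3 0 \<alpha> 1 (s-\<alpha>) 2 (1-s)"
  define p' where "p' = d3 0 \<alpha> 2 (1-\<alpha>) (m-1) 0"
  have D: "pT \<in> Dists m" "pk \<in> Dists m" "pR \<in> Dists m" "p \<in> Dists m" "p' \<in> Dists m"
    unfolding pT_def pk_def pR_def p_def p'_def using m3 s \<alpha> \<beta> b by (intro d3_Dists; simp)+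
  define pp where "pp = PP i k T p pk pT pR"
  define pp' where "pp' = PP i k T p' pk pT pR"
  have ppP: "pp \<in> Profiles n m" "pp' \<in> Profiles n m" unfolding pp_def pp'_def using PP_Profiles D by auto
  have upd: "pp(i := p') = pp'" unfolding pp_def pp'_def using PP_upd[OF i] .
  have ppi: "pp i = p" unfolding pp_def using PP_i[OF i] .
  have L: "L1 m (\<psi> pp) p \<le> L1 m (\<psi> pp') p" using L1SP_D[OF i ppP(1) D(5)] unfolding upd ppi .
  have Tk: "insert k T \<subseteq> Agents n" using T k by auto
  have GV: "G (v i t k c T') = max (max (W T') (min c (W (insert k T'))))
            (min t (max (W (insert i T')) (min c (W (insert i (insert k T'))))))"
    if "T' \<subseteq> Agents n" "i \<notin> T'" "k \<notin> T'" "0 \<le> t" "t \<le> 1" "0 \<le> c" "c \<le> 1" for T' t c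
    using G_v[OF i k ik that] .
  have Q0: "cdf (\<psi> pp) 0 = Wi" "cdf (\<psi> pp') 0 = Wi"
  proof -
    have g: "G (v i \<alpha> k 0 {}) = Wi"
      using GV[of "{}" \<alpha> 0] \<alpha> \<beta> b s W_empty W_bounds unfolding Wi_def by (simp add: max_def min_def)
    show "cdf (\<psi> pp) 0 = Wi" unfolding pp_def using g m3
      by (subst shape_v0[OF D(4,2,1,3), of 0 \<alpha> 0]) (auto simp: p_def pk_def pT_def pR_def cdf_d3)
    show "cdf (\<psi> pp') 0 = Wi" unfolding pp'_def using g m3
      by (subst shape_v0[OF D(5,2,1,3), of 0 \<alpha> 0]) (auto simp: p'_def pk_def pT_def pR_def cdf_d3)
  qed
  have s12: "W1 < s" "W2 < s" using s by auto
  have G1: "G (v i s k s T) = s" "G (v i 1 k s T) = s" "G (v i \<alpha> k s T) = \<alpha>"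
  proof -
    note gv = GV[OF T iT kT, unfolded W1_def[symmetric] W2_def[symmetric] W3_def[symmetric] WT_def[symmetric]]
    show "G (v i s k s T) = s" using gv[of s s] s s12 b by (simp add: max_def min_def)
    show "G (v i 1 k s T) = s" using gv[of 1 s] s s12 b by (simp add: max_def min_def)
    show "G (v i \<alpha> k s T) = \<alpha>" using gv[of \<alpha> s] s s12 b \<alpha> \<beta> by (simp add: max_def min_def)
  qed
  have Q1: "cdf (\<psi> pp) 1 = s" "cdf (\<psi> pp') 1 = \<alpha>"
  proof -
    show "cdf (\<psi> pp) 1 = s" unfolding pp_def using G1 m3
      by (subst shape_v1[OF D(4,2,1,3), of 1 s s]) (auto simp: p_def pk_def pT_def pR_def cdf_d3)
    show "cdf (\<psi> pp') 1 = \<alpha>" unfolding pp'_def using G1 m3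
      by (subst shape_v1[OF D(5,2,1,3), of 1 \<alpha> s]) (auto simp: p'_def pk_def pT_def pR_def cdf_d3)
  qed
  have Q2: "cdf (\<psi> pp) a = s" "cdf (\<psi> pp') a = s" if a: "2 \<le> a" "a < m - 1" for a
  proof -
    show "cdf (\<psi> pp) a = s" unfolding pp_def using G1 m3 a
      by (subst shape_v1[OF D(4,2,1,3), of a 1 s]) (auto simp: p_def pk_def pT_def pR_def cdf_d3)
    show "cdf (\<psi> pp') a = s" unfolding pp'_def using G1 m3 a
      by (subst shape_v1[OF D(5,2,1,3), of a 1 s]) (auto simp: p'_def pk_def pT_def pR_def cdf_d3)
  qed
  have Qtop: "cdf (\<psi> pp) (m-1) = 1" "cdf (\<psi> pp') (m-1) = 1"
    using cdf_top[OF out_Dists[OF ppP(1)], of "m-1"] cdf_top[OF out_Dists[OF ppP(2)], of "m-1"] m4 by auto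
  have pv: "p 0 = \<alpha>" "p 1 = s - \<alpha>" "p 2 = 1 - s" "p (m-1) = 0" "\<And>j. 3 \<le> j \<Longrightarrow> j < m - 1 \<Longrightarrow> p j = 0"
    unfolding p_def d3_def pt_def using m3 by auto
  have mid: "(\<Sum>j\<in>{3..<m-1}. \<bar>\<psi> q j - p j\<bar>) = 0" if "q = pp \<or> q = pp'" for q
  proof (rule sum.neutral, rule ballI)
    fix j assume j: "j \<in> {3..<m-1}"
    have "\<psi> q j = cdf (\<psi> q) j - cdf (\<psi> q) (j - 1)" using pdf_cdf j by auto
    also have "\<dots> = 0" using that Q2[of j] Q2[of "j-1"] j by auto
    finally show "\<bar>\<psi> q j - p j\<bar> = 0" using pv(5) j by simp
  qed
  have qv: "\<psi> q 0 = cdf (\<psi> q) 0" "\<psi> q 1 = cdf (\<psi> q) 1 - cdf (\<psi> q) 0"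
    "\<psi> q 2 = cdf (\<psi> q) 2 - cdf (\<psi> q) 1" "\<psi> q (m-1) = cdf (\<psi> q) (m-1) - cdf (\<psi> q) (m - 2)" for q
    using cdf_0[of "\<psi> q"] pdf_cdf[of 1 "\<psi> q"] pdf_cdf[of 2 "\<psi> q"] pdf_cdf[of "m-1" "\<psi> q"] m3
    by (auto simp: numeral_2_eq_2)
  have m2: "2 \<le> m - 2" "m - 2 < m - 1" using m4 by auto
  have LA: "L1 m (\<psi> pp) p = (\<alpha> - Wi) + (\<alpha> - Wi) + (1 - s) + (1 - s)"
    unfolding L1_split[OF m4] qv Q0 Q1 Q2[OF order_refl m3(1)] Q2[OF m2] Qtop pv
    using \<alpha> \<beta> mid[of pp] by simp
  have LB: "L1 m (\<psi> pp') p = (\<alpha> - Wi) + \<bar>\<alpha> - Wi - (s - \<alpha>)\<bar> + \<bar>s - \<alpha> - (1 - s)\<bar> + (1 - s)"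
    unfolding L1_split[OF m4] qv Q0 Q1 Q2[OF order_refl m3(1)] Q2[OF m2] Qtop pv
    using \<alpha> \<beta> s mid[of pp'] by simp
  have a2: "2 * \<alpha> = s + \<beta>" unfolding \<alpha>_def by simp
  have "0 \<le> \<alpha> - Wi - (s - \<alpha>)" using a2 \<beta> by linarith
  moreover have "s - \<alpha> - (1 - s) \<le> 0" using \<alpha> \<beta> by linarith
  ultimately have "\<bar>\<alpha> - Wi - (s - \<alpha>)\<bar> = 2 * \<alpha> - Wi - s" "\<bar>s - \<alpha> - (1 - s)\<bar> = 1 + \<alpha> - 2 * s"
    by simp_all
  then have "L1 m (\<psi> pp') p < L1 m (\<psi> pp) p" unfolding LA LB using \<alpha> by simp
  then show False using L by simp
qed


lemma Mplus:
  assumes i: "i \<in> Agents n" and k: "k \<in> Agents n" and ik: "i \<noteq> k" and T: "T \<subseteq> Agents n"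
    and iT: "i \<notin> T" and kT: "k \<notin> T"
  shows "min (W (insert i T)) (W (insert k T)) \<le> W T"
proof (rule ccontr)
  assume H: "\<not> ?thesis"
  define W1 where "W1 = W (insert i T)"
  define W2 where "W2 = W (insert k T)"
  define WT where "WT = W T"
  define WN where "WN = W (Agents n - {i})"
  define T' where "T' = Agents n - {i, k}"
  have b: "0 \<le> WT" "W2 \<le> WN" "W1 \<le> 1" "W (T') \<le> WN"
    unfolding WT_def W2_def WN_def W1_def T'_def using W_bounds W_mono[of "insert k T" "Agents n - {i}"]
      W_mono[of "Agents n - {i, k}" "Agents n - {i}"] T k iT ik by auto
  have H': "WT < W1" "WT < W2" using H unfolding W1_def W2_def WT_def by (auto simp: not_le)
  define s where "s = (WT + min W1 W2) / 2"
  define \<gamma> where "\<gamma> = (s + min W1 W2) / 2"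
  have s: "WT < s" "s < W1" "s < W2" "0 < s" using H' b unfolding s_def by auto
  have \<gamma>: "s < \<gamma>" "\<gamma> < W1" "\<gamma> < W2" "2 * \<gamma> \<le> s + WN" "\<gamma> < 1" "\<gamma> < WN"
    using s b unfolding \<gamma>_def by auto
  have m3: "2 < m - 1" "0 < m - 1" "1 < m - 1" "2 < m" "1 < m" "m - 1 < m" using m4 by auto
  define pT where "pT = d3 0 1 0 0 0 0"
  define pk where "pk = d3 0 s 2 (1-s) 0 0"
  define pR where "pR = d3 2 1 0 0 0 0"
  define p where "p = d3 1 s 2 (\<gamma>-s) (m-1) (1-\<gamma>)"
  define p' where "p' = d3 1 \<gamma> (m-1) (1-\<gamma>) 0 0"
  have D: "pT \<in> Dists m" "pk \<in> Dists m" "pR \<in> Dists m" "p \<in> Dists m" "p' \<in> Dists m"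
    unfolding pT_def pk_def pR_def p_def p'_def using m3 s \<gamma> b by (intro d3_Dists; simp)+
  define pp where "pp = PP i k T p pk pT pR"
  define pp' where "pp' = PP i k T p' pk pT pR"
  have ppP: "pp \<in> Profiles n m" "pp' \<in> Profiles n m" unfolding pp_def pp'_def using PP_Profiles D by auto
  have upd: "pp(i := p') = pp'" unfolding pp_def pp'_def using PP_upd[OF i] .
  have ppi: "pp i = p" unfolding pp_def using PP_i[OF i] .
  have L: "L1 m (\<psi> pp) p \<le> L1 m (\<psi> pp') p" using L1SP_D[OF i ppP(1) D(5)] unfolding upd ppi .
  have GV: "G (v i t k c T'') = max (max (W T'') (min c (W (insert k T''))))
            (min t (max (W (insert i T'')) (min c (W (insert i (insert k T''))))))"
    if "T'' \<subseteq> Agents n" "i \<notin> T''" "k \<notin> T''" "0 \<le> t" "t \<le> 1" "0 \<le> c" "c \<le> 1" for T'' t c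
    using G_v[OF i k ik that] .
  have G1: "G (v i 0 k s T) = s" "G (v i s k s T) = s" "G (v i \<gamma> k s T) = \<gamma>"
  proof -
    note gv = GV[OF T iT kT, unfolded W1_def[symmetric] W2_def[symmetric] WT_def[symmetric]]
    have w3: "0 \<le> W (insert i (insert k T))" using W_bounds by auto
    show "G (v i 0 k s T) = s" using gv[of 0 s] s \<gamma> b w3 by (simp add: max_def min_def)
    show "G (v i s k s T) = s" using gv[of s s] s \<gamma> b w3 by (simp add: max_def min_def)
    show "G (v i \<gamma> k s T) = \<gamma>" using gv[of \<gamma> s] s \<gamma> b w3 by (simp add: max_def min_def)
  qed
  have G2: "G (v i \<gamma> k 1 T') = WN"
  proof -
    have T'1: "T' \<subseteq> Agents n" "i \<notin> T'" "k \<notin> T'" unfolding T'_def by auto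
    have e1: "insert k T' = Agents n - {i}" "insert i (insert k T') = Agents n"
      unfolding T'_def using i k ik by auto
    have w: "0 \<le> W (insert i T')" using W_bounds by auto
    note g = GV[OF T'1, of \<gamma> 1, unfolded e1(2), unfolded e1(1), unfolded W_all WN_def[symmetric]]
    have "WN \<le> 1" unfolding WN_def using W_bounds by auto
    then show ?thesis using g \<gamma> s b w by (simp add: max_def min_def)
  qed
  have Q0: "cdf (\<psi> pp) 0 = s" "cdf (\<psi> pp') 0 = s"
  proof -
    show "cdf (\<psi> pp) 0 = s" unfolding pp_def using G1 m3
      by (subst shape_v1[OF D(4,2,1,3), of 0 0 s]) (auto simp: p_def pk_def pT_def pR_def cdf_d3)
    show "cdf (\<psi> pp') 0 = s" unfolding pp'_def using G1 m3
      by (subst shape_v1[OF D(5,2,1,3), of 0 0 s]) (auto simp: p'_def pk_def pT_def pR_def cdf_d3)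
  qed
  have Q1: "cdf (\<psi> pp) 1 = s" "cdf (\<psi> pp') 1 = \<gamma>"
  proof -
    show "cdf (\<psi> pp) 1 = s" unfolding pp_def using G1 m3
      by (subst shape_v1[OF D(4,2,1,3), of 1 s s]) (auto simp: p_def pk_def pT_def pR_def cdf_d3)
    show "cdf (\<psi> pp') 1 = \<gamma>" unfolding pp'_def using G1 m3
      by (subst shape_v1[OF D(5,2,1,3), of 1 \<gamma> s]) (auto simp: p'_def pk_def pT_def pR_def cdf_d3)
  qed
  have Q2: "cdf (\<psi> pp) a = WN" "cdf (\<psi> pp') a = WN" if a: "2 \<le> a" "a < m - 1" for a
  proof -
    show "cdf (\<psi> pp) a = WN" unfolding pp_def using G2 m3 a unfolding T'_def
      by (subst shape_v2[OF D(4,2,1,3), of a \<gamma> 1]) (auto simp: p_def pk_def pT_def pR_def cdf_d3)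
    show "cdf (\<psi> pp') a = WN" unfolding pp'_def using G2 m3 a unfolding T'_def
      by (subst shape_v2[OF D(5,2,1,3), of a \<gamma> 1]) (auto simp: p'_def pk_def pT_def pR_def cdf_d3)
  qed
  have Qtop: "cdf (\<psi> pp) (m-1) = 1" "cdf (\<psi> pp') (m-1) = 1"
    using cdf_top[OF out_Dists[OF ppP(1)], of "m-1"] cdf_top[OF out_Dists[OF ppP(2)], of "m-1"] m4 by auto
  have pv: "p 0 = 0" "p 1 = s" "p 2 = \<gamma> - s" "p (m-1) = 1 - \<gamma>" "\<And>j. 3 \<le> j \<Longrightarrow> j < m - 1 \<Longrightarrow> p j = 0"
    unfolding p_def d3_def pt_def using m3 by auto
  have mid: "(\<Sum>j\<in>{3..<m-1}. \<bar>\<psi> q j - p j\<bar>) = 0" if "q = pp \<or> q = pp'" for q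
  proof (rule sum.neutral, rule ballI)
    fix j assume j: "j \<in> {3..<m-1}"
    have "\<psi> q j = cdf (\<psi> q) j - cdf (\<psi> q) (j - 1)" using pdf_cdf j by auto
    also have "\<dots> = 0" using that Q2[of j] Q2[of "j-1"] j by auto
    finally show "\<bar>\<psi> q j - p j\<bar> = 0" using pv(5) j by simp
  qed
  have qv: "\<psi> q 0 = cdf (\<psi> q) 0" "\<psi> q 1 = cdf (\<psi> q) 1 - cdf (\<psi> q) 0"
    "\<psi> q 2 = cdf (\<psi> q) 2 - cdf (\<psi> q) 1" "\<psi> q (m-1) = cdf (\<psi> q) (m-1) - cdf (\<psi> q) (m - 2)" for q
    using cdf_0[of "\<psi> q"] pdf_cdf[of 1 "\<psi> q"] pdf_cdf[of 2 "\<psi> q"] pdf_cdf[of "m-1" "\<psi> q"] m3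
    by (auto simp: numeral_2_eq_2)
  have m2: "2 \<le> m - 2" "m - 2 < m - 1" using m4 by auto
  have LA: "L1 m (\<psi> pp) p = s + s + (WN - \<gamma>) + (WN - \<gamma>)"
    unfolding L1_split[OF m4] qv Q0 Q1 Q2[OF order_refl m3(1)] Q2[OF m2] Qtop pv
    using \<gamma> s mid[of pp] by simp
  have LB: "L1 m (\<psi> pp') p = s + \<bar>\<gamma> - s - s\<bar> + \<bar>WN - \<gamma> - (\<gamma> - s)\<bar> + (WN - \<gamma>)"
    unfolding L1_split[OF m4] qv Q0 Q1 Q2[OF order_refl m3(1)] Q2[OF m2] Qtop pv
    using \<gamma> s mid[of pp'] by simp
  have "0 \<le> WN - \<gamma> - (\<gamma> - s)" using \<gamma> by linarith
  then have e: "\<bar>WN - \<gamma> - (\<gamma> - s)\<bar> = WN - \<gamma> - (\<gamma> - s)" by simp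
  have "\<bar>\<gamma> - s - s\<bar> < \<gamma>" using \<gamma> s by (simp add: abs_less_iff)
  then have "L1 m (\<psi> pp') p < L1 m (\<psi> pp) p" unfolding LA LB e by simp
  then show False using L by simp
qed


lemma fin_Agents: "finite (Agents n)" unfolding Agents_def by simp

lemma exists_one: "\<exists>i\<in>Agents n. W {i} = 1"
proof -
  have C: "T \<subseteq> Agents n \<Longrightarrow> T \<noteq> {} \<Longrightarrow> \<exists>j\<in>T. W T \<le> W {j}" for T
  proof (induction "card T" arbitrary: T rule: less_induct)
    case less
    have finT: "finite T" using less.prems(1) fin_Agents finite_subset by blast
    show ?case
    proof (cases "\<exists>j. T = {j}")
      case True then show ?thesis by auto
    next
      case False
      obtain i where iT: "i \<in> T" using less.prems(2) by auto
      obtain k where kT: "k \<in> T" "k \<noteq> i" using False iT by blast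
      define T0 where "T0 = T - {i, k}"
      have Te: "T = insert i (insert k T0)" unfolding T0_def using iT kT by auto
      have M: "W T \<le> max (W (insert i T0)) (W (insert k T0))"
        unfolding Te using less.prems(1) iT kT by (intro Mminus) (auto simp: T0_def)
      have c1: "card (insert i T0) < card T" "card (insert k T0) < card T"
        unfolding Te using finT kT unfolding T0_def by (auto simp: card_insert_if)
      obtain j1 where j1: "j1 \<in> insert i T0" "W (insert i T0) \<le> W {j1}"
        using less.hyps[OF c1(1)] less.prems(1) Te by auto
      obtain j2 where j2: "j2 \<in> insert k T0" "W (insert k T0) \<le> W {j2}"
        using less.hyps[OF c1(2)] less.prems(1) Te by auto
      show ?thesis
      proof (cases "W (insert i T0) \<le> W (insert k T0)")
        case True then show ?thesis using M j2 Te by (intro bexI[of _ j2]) auto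
      next
        case False then show ?thesis using M j1 Te by (intro bexI[of _ j1]) auto
      qed
    qed
  qed
  have "Agents n \<noteq> {}" using W_empty W_all by auto
  then obtain j where "j \<in> Agents n" "W (Agents n) \<le> W {j}" using C by blast
  then show ?thesis using W_all W_bounds[of "{j}"] by auto
qed

lemma rest_zero:
  assumes i: "i \<in> Agents n" and wi: "W {i} = 1"
  shows "W (Agents n - {i}) = 0"
proof -
  have fin: "finite (Agents n - {i})" using fin_Agents by simp
  have "W F = 0" if "F \<subseteq> Agents n - {i}" for F
    using finite_subset[OF that fin] that
  proof (induction F rule: finite_subset_induct')
    case empty then show ?case using W_empty by simp
  next
    case (insert k F)
    have M: "min (W (insert i F)) (W (insert k F)) \<le> W F"
      using insert i by (intro Mplus) auto
    have "1 \<le> W (insert i F)" using W_mono[of "{i}" "insert i F"] wi by auto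
    then show ?case using M insert.IH W_bounds[of "insert k F"] by (auto simp: min_def split: if_splits)
  qed
  then show ?thesis by simp
qed

lemma G_dict:
  assumes i: "i \<in> Agents n" and wi: "W {i} = 1" and x: "xin x"
  shows "G x = x i"
proof -
  have xi: "0 \<le> x i" "x i \<le> 1" using x i unfolding xin_def by auto
  have z: "xin (\<lambda>_. 0)" "xin (\<lambda>_. 1)" unfolding xin_def by auto
  have "(\<lambda>_::nat. 0::real)(i := 0) = (\<lambda>_. 0)" by (rule ext) simp
  then have a1: "G ((\<lambda>_. 0)(i := 0)) = 0" using G_zero by simp
  have a2: "G ((\<lambda>_. 0)(i := 1)) = W {i}" unfolding W_def by (rule G_cong) auto
  have b1: "G ((\<lambda>_. 1)(i := 0)) = W (Agents n - {i})" unfolding W_def by (rule G_cong) auto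
  have b2: "G ((\<lambda>_. 1)(i := 1)) = W (Agents n)" unfolding W_def by (rule G_cong) auto
  note a2 = a2[unfolded wi] and b1 = b1[unfolded rest_zero[OF i wi]] and b2 = b2[unfolded W_all]
  have lo: "G ((\<lambda>_. 0)(i := x i)) = x i" using G_median[OF z(1) i xi] a1 a2 xi by simp
  have hi: "G ((\<lambda>_. 1)(i := x i)) = x i" using G_median[OF z(2) i xi] b1 b2 xi by simp
  have x0: "xin ((\<lambda>_. 0)(i := x i))" "xin ((\<lambda>_. 1)(i := x i))" using xi unfolding xin_def by auto
  have "G ((\<lambda>_. 0)(i := x i)) \<le> G x"
  proof (rule G_mono[OF x0(1) x])
    fix j assume "j \<in> Agents n" then show "((\<lambda>_. 0)(i := x i)) j \<le> x j" using x unfolding xin_def by simp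
  qed
  moreover have "G x \<le> G ((\<lambda>_. 1)(i := x i))"
  proof (rule G_mono[OF x x0(2)])
    fix j assume "j \<in> Agents n" then show "x j \<le> ((\<lambda>_. 1)(i := x i)) j" using x unfolding xin_def by simp
  qed
  ultimately show ?thesis using lo hi by simp
qed

lemma dictator: "dictatorial n m \<psi>"
proof -
  obtain i where i: "i \<in> Agents n" and wi: "W {i} = 1" using exists_one by blast
  have "\<psi> pp = pp i" if pp: "pp \<in> Profiles n m" for pp
  proof (rule cdf_eq_fun)
    fix a
    show "cdf (\<psi> pp) a = cdf (pp i) a"
    proof (cases "a < m - 1")
      case True
      have x: "xin (\<lambda>j. cdf (pp j) a)" unfolding xin_def using Profiles_mem[OF pp] cdf_nonneg cdf_le1 by blast
      show ?thesis using loc_G[OF pp True] G_dict[OF i wi x] by simp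
    next
      case False
      then have ma: "m \<le> Suc a" by simp
      show ?thesis using cdf_top[OF out_Dists[OF pp] ma] cdf_top[OF Profiles_mem[OF pp i] ma] by simp
    qed
  qed
  then show ?thesis unfolding dictatorial_def using i by blast
qed

end


theorem mainTheorem16:
  fixes n m :: nat
    and \<psi> :: "(nat \<Rightarrow> nat \<Rightarrow> real) \<Rightarrow> (nat \<Rightarrow> real)"
  assumes "m \<ge> 4"
    and "is_PAF n m \<psi>"
    and "certainty_preserving n m \<psi>"
  shows "(level_SP n m \<psi> \<and> L1_SP n m \<psi>) \<longleftrightarrow> dictatorial n m \<psi>"
proof
  assume h: "level_SP n m \<psi> \<and> L1_SP n m \<psi>"
  interpret SPsetup n m \<psi> using assms h by unfold_locales auto
  show "dictatorial n m \<psi>" by (rule dictator)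
next
  assume "dictatorial n m \<psi>"
  then obtain i where i: "i \<in> Agents n" and d: "\<And>pp. pp \<in> Profiles n m \<Longrightarrow> \<psi> pp = pp i"
    unfolding dictatorial_def by blast
  have key: "(j = i \<and> \<psi> pp = pp j) \<or> \<psi> (pp(j := p')) = \<psi> pp"
    if "j \<in> Agents n" "pp \<in> Profiles n m" "p' \<in> Dists m" for j pp p'
  proof (cases "j = i")
    case True then show ?thesis using d that by simp
  next
    case False
    have "pp(j := p') \<in> Profiles n m" using Profiles_upd that by blast
    then have "\<psi> (pp(j := p')) = pp i" using d False by simp
    then show ?thesis using d that by simp
  qed
  have "level_SP n m \<psi>" unfolding level_SP_def
  proof (intro ballI allI impI conjI)
    fix j pp p' a assume "j \<in> Agents n" "pp \<in> Profiles n m" "p' \<in> Dists m" "a < m"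
    note K = key[OF this(1-3)]
    { assume "cdf (pp j) a < cdf (\<psi> pp) a"
      then show "cdf (\<psi> pp) a \<le> cdf (\<psi> (pp(j := p'))) a" using K by auto }
    { assume "cdf (pp j) a > cdf (\<psi> pp) a"
      then show "cdf (\<psi> pp) a \<ge> cdf (\<psi> (pp(j := p'))) a" using K by auto }
  qed
  moreover have "L1_SP n m \<psi>" unfolding L1_SP_def
  proof (intro ballI)
    fix j pp p' assume "j \<in> Agents n" "pp \<in> Profiles n m" "p' \<in> Dists m"
    note K = key[OF this]
    have nn: "0 \<le> L1 m (\<psi> (pp(j := p'))) (pp j)" unfolding L1_def by (intro sum_nonneg) auto
    show "L1 m (\<psi> pp) (pp j) \<le> L1 m (\<psi> (pp(j := p'))) (pp j)"
    proof (cases "j = i \<and> \<psi> pp = pp j")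
      case True then show ?thesis using nn by (simp add: L1_def)
    next
      case False
      then have "\<psi> (pp(j := p')) = \<psi> pp" using K by blast
      then show ?thesis by simp
    qed
  qed
  ultimately show "level_SP n m \<psi> \<and> L1_SP n m \<psi>" by simp
qed

end
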